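(* Let $1\le m<n$. (a) If $m=1$, then for every $A\in\mathbb R^{1\times n}$ and all $0<p,q\le\infty$: $\mathrm{pginv}_{\mathrm{row}(p,q)}(A)=\mathrm{ginv}_q(A)$; consequently there is a full-rank $A_1\in\mathbb R^{1\times n}$ with $A_1^\dagger\in\mathrm{pginv}_{\mathrm{row}(p,q)}(A_1)\iff q=2$ for $0<p\le\infty$, $0<q<\infty$. (b) If $m\ge2$, there exists a full-rank $A_4\in\mathbb R^{m\times n}$ such that for all $1\le p<\infty$ and $0<q<\infty$: $A_4^\dagger\in\mathrm{pginv}_{\mathrm{row}(p,q)}(A_4)\iff q=2$. (c) If $m\ge3$, there exists a full-rank $A_5\in\mathbb R^{m\times n}$ such that for all $1\le p<\infty$ and $q=2$: $A_5^\dagger\in\mathrm{pginv}_{\mathrm{row}(p,2)}(A_5)\iff p=2$. (d) If $m\ge3$, $1\le p<\infty$ and $0<q<\infty$, then: $A^\dagger\in\mathrm{pginv}_{\mathrm{row}(p,q)}(A)$ for every full-rank $A\in\mathbb R^{m\times n}$ if and only if $(p,q)=(2,2)$.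
   Context: Generalized inverses are taken real: $\mathcal G(A)=\{X\in\mathbb R^{n\times m}:AX=I_m\}$, $\mathrm{ginv}_\nu(A)=\arg\min_{X\in\mathcal G(A)}\|X\|_\nu$, $\mathrm{pginv}_\mu(A)=\arg\min_{X\in\mathcal G(A)}\|XA\|_\mu$ (sets). For $M$ with rows $m^i$, $\|M\|_{\mathrm{row}(p,q)}=(\sum_i\|m^i\|_p^q)^{1/q}$ (maximum for $q=\infty$); entrywise $\|M\|_q=\|\mathrm{vec}(M)\|_q$. $A^\dagger=A^\top(AA^\top)^{-1}$. *)

theory Defs
  imports "HOL-Analysis.Analysis"
begin

definition lp_norm :: "ereal \<Rightarrow> real ^ 'k \<Rightarrow> real" where
  "lp_norm p v = (if p = \<infinity> then Max (range (\<lambda>j. \<bar>v $ j\<bar>))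
     else (\<Sum>j\<in>UNIV. \<bar>v $ j\<bar> powr real_of_ereal p) powr (1 / real_of_ereal p))"

definition row_norm :: "ereal \<Rightarrow> ereal \<Rightarrow> real ^ 'k ^ 'l \<Rightarrow> real" where
  "row_norm p q M = lp_norm q (\<chi> i. lp_norm p (M $ i))"

definition entry_norm :: "ereal \<Rightarrow> real ^ 'k ^ 'l \<Rightarrow> real" where
  "entry_norm q M = (if q = \<infinity> then Max (range (\<lambda>(i,j). \<bar>M $ i $ j\<bar>))
     else (\<Sum>(i,j)\<in>UNIV. \<bar>M $ i $ j\<bar> powr real_of_ereal q) powr (1 / real_of_ereal q))"

definition ginvs :: "real ^ 'n ^ 'm \<Rightarrow> (real ^ 'm ^ 'n) set" where
  "ginvs A = {X. A ** X = mat 1}"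

definition ginv :: "ereal \<Rightarrow> real ^ 'n ^ 'm \<Rightarrow> (real ^ 'm ^ 'n) set" where
  "ginv q A = {X \<in> ginvs A. \<forall>Y \<in> ginvs A. entry_norm q X \<le> entry_norm q Y}"

definition pginv_row :: "ereal \<Rightarrow> ereal \<Rightarrow> real ^ 'n ^ 'm \<Rightarrow> (real ^ 'm ^ 'n) set" where
  "pginv_row p q A = {X \<in> ginvs A. \<forall>Y \<in> ginvs A. row_norm p q (X ** A) \<le> row_norm p q (Y ** A)}"

definition pinv :: "real ^ 'n ^ 'm \<Rightarrow> real ^ 'm ^ 'n" where
  "pinv A = transpose A ** matrix_inv (A ** transpose A)"

definition full_rank :: "real ^ 'n ^ 'm \<Rightarrow> bool" where
  "full_rank A \<longleftrightarrow> rank A = min CARD('m) CARD('n)"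

end

theory Submission
  imports Defs
begin

definition NN :: "real \<Rightarrow> real^'k \<Rightarrow> real" where
  "NN p v = (\<Sum>j\<in>UNIV. \<bar>v $ j\<bar> powr p)"

definition Phi :: "real \<Rightarrow> real \<Rightarrow> real^'k^'l \<Rightarrow> real" where
  "Phi p q M = (\<Sum>k\<in>UNIV. NN p (M $ k) powr (q/p))"

lemma NN_nonneg: "0 \<le> NN p v"
  unfolding NN_def by (intro sum_nonneg) auto

lemma Phi_nonneg: "0 \<le> Phi p q M"
  unfolding Phi_def by (intro sum_nonneg) auto

lemma lp_norm_real: "lp_norm (ereal p) v = NN p v powr (1/p)"
  by (simp add: lp_norm_def NN_def)

lemma row_norm_Phi:
  assumes "0 < p" "0 < q"
  shows "row_norm (ereal p) (ereal q) M = Phi p q M powr (1/q)"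
proof -
  have "row_norm (ereal p) (ereal q) M = (\<Sum>k\<in>UNIV. \<bar>NN p (M$k) powr (1/p)\<bar> powr q) powr (1/q)"
    by (simp add: row_norm_def lp_norm_def NN_def)
  also have "\<dots> = Phi p q M powr (1/q)"
    unfolding Phi_def by (simp add: powr_powr)
  finally show ?thesis .
qed

lemma pginv_iff:
  assumes "0 < p" "0 < q"
  shows "X \<in> pginv_row (ereal p) (ereal q) A \<longleftrightarrow>
     X \<in> ginvs A \<and> (\<forall>Y\<in>ginvs A. Phi p q (X ** A) \<le> Phi p q (Y ** A))"
proof -
  have *: "a powr (1/q) \<le> b powr (1/q) \<longleftrightarrow> a \<le> b" if "0 \<le> a" "0 \<le> b" for a b :: real
  proof
    assume "a powr (1/q) \<le> b powr (1/q)"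
    then show "a \<le> b" using powr_less_mono2[of "1/q" b a] that assms by force
  next
    assume "a \<le> b" then show "a powr (1/q) \<le> b powr (1/q)" using powr_mono2[of "1/q" a b] that assms by simp
  qed
  show ?thesis unfolding pginv_row_def
    by (simp add: row_norm_Phi assms * Phi_nonneg)
qed

lemma matrix_inv_props:
  fixes M :: "real^'n^'n"
  assumes "invertible M"
  shows "M ** matrix_inv M = mat 1" "matrix_inv M ** M = mat 1"
proof -
  have "\<exists>A'. M ** A' = mat 1 \<and> A' ** M = mat 1" using assms unfolding invertible_def by blast
  then have "M ** matrix_inv M = mat 1 \<and> matrix_inv M ** M = mat 1"
    unfolding matrix_inv_def by (rule someI_ex)
  then show "M ** matrix_inv M = mat 1" "matrix_inv M ** M = mat 1" by auto
qed

lemma matrix_inv_unique: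
  fixes M N :: "real^'n^'n"
  assumes "M ** N = mat 1"
  shows "matrix_inv M = N"
proof -
  have inv: "invertible M" using assms invertible_right_inverse by blast
  have "matrix_inv M = matrix_inv M ** (M ** N)" using assms by simp
  also have "\<dots> = (matrix_inv M ** M) ** N" by (simp add: matrix_mul_assoc)
  also have "\<dots> = N" using matrix_inv_props[OF inv] by simp
  finally show ?thesis .
qed

lemma invertible_full_rank:
  fixes A :: "real^'n^'m"
  assumes "CARD('m) \<le> CARD('n)" "invertible (A ** transpose A)"
  shows "full_rank A"
proof -
  have "rank (A ** transpose A) = CARD('m)"
    using full_rank_injective inj_matrix_vector_mult[OF assms(2)] by blast
  moreover have "rank (A ** transpose A) \<le> rank A" by (rule rank_mul_le_left)
  moreover have "rank A \<le> min CARD('m) CARD('n)" by (rule rank_bound)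
  ultimately show ?thesis unfolding full_rank_def using assms(1) by (simp add: min_def)
qed

lemma full_rank_invertible:
  fixes A :: "real^'n^'m"
  assumes "CARD('m) \<le> CARD('n)" "full_rank A"
  shows "invertible (A ** transpose A)"
proof -
  have "rank (transpose A) = CARD('m)"
    using assms by (simp add: full_rank_def rank_transpose min_def)
  then have inj: "inj ((*v) (transpose A))" using full_rank_injective by blast
  have "inj ((*v) (A ** transpose A))"
    unfolding linear_injective_0[OF matrix_vector_mul_linear]
  proof -
    show "\<forall>x. (A ** transpose A) *v x = 0 \<longrightarrow> x = 0"
    proof (intro allI impI)
      fix x assume h: "(A ** transpose A) *v x = 0"
      have "inner (transpose A *v x) (transpose A *v x) = inner x (A *v (transpose A *v x))"
        by (simp add: dot_lmul_matrix)
      also have "\<dots> = 0"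
      proof -
        have "A *v (transpose A *v x) = 0" using h by (metis matrix_vector_mul_assoc)
        then show ?thesis by simp
      qed
      finally have "transpose A *v x = 0" by simp
      then show "x = 0" using inj by (metis inj_eq matrix_vector_mult_0_right)
    qed
  qed
  then show ?thesis
    using matrix_left_invertible_injective invertible_left_inverse by blast
qed

lemma pinv_ginvs:
  fixes A :: "real^'n^'m"
  assumes "invertible (A ** transpose A)"
  shows "pinv A \<in> ginvs A"
  using matrix_inv_props[OF assms] unfolding ginvs_def pinv_def
  by (simp add: matrix_mul_assoc)

lemma NN2: "NN 2 v = (\<Sum>j\<in>UNIV. (v $ j)^2)"
  unfolding NN_def by (simp add: powr_numeral)

lemma Phi22: "Phi 2 2 M = (\<Sum>k\<in>UNIV. \<Sum>j\<in>UNIV. (M $ k $ j)^2)"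
  unfolding Phi_def using NN_nonneg by (simp add: NN2 powr_one sum_nonneg)

lemma matrix_sub_ldistrib: "(A::real^'n^'m) ** (B - C) = A ** B - A ** C"
  by (simp add: matrix_matrix_mult_def vec_eq_iff sum_subtractf right_diff_distrib)

lemma frob_pyth:
  fixes P Q :: "real^'n^'n"
  assumes sym: "transpose P = P" and PQ: "P ** Q = P" and PP: "P ** P = P"
  shows "(\<Sum>k\<in>UNIV. \<Sum>j\<in>UNIV. (P $ k $ j)^2) \<le> (\<Sum>k\<in>UNIV. \<Sum>j\<in>UNIV. (Q $ k $ j)^2)"
proof -
  let ?R = "Q - P"
  have R0: "P ** ?R = 0" using PQ PP by (simp add: matrix_sub_ldistrib)
  have symE: "P $ k $ j = P $ j $ k" for k j
    using sym by (metis transpose_def vec_lambda_beta)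
  have "(\<Sum>k\<in>UNIV. \<Sum>j\<in>UNIV. P $ k $ j * ?R $ k $ j) = (\<Sum>k\<in>UNIV. \<Sum>j\<in>UNIV. P $ j $ k * ?R $ k $ j)"
    by (simp add: symE[of _ _])
  also have "\<dots> = (\<Sum>j\<in>UNIV. \<Sum>k\<in>UNIV. P $ j $ k * ?R $ k $ j)" by (rule sum.swap)
  also have "\<dots> = (\<Sum>j\<in>UNIV. (P ** ?R) $ j $ j)" by (simp add: matrix_matrix_mult_def)
  also have "\<dots> = 0" using R0 by simp
  finally have cross: "(\<Sum>k\<in>UNIV. \<Sum>j\<in>UNIV. P $ k $ j * ?R $ k $ j) = 0" .
  have "(\<Sum>k\<in>UNIV. \<Sum>j\<in>UNIV. (Q $ k $ j)^2) = (\<Sum>k\<in>UNIV. \<Sum>j\<in>UNIV. (P $ k $ j + ?R $ k $ j)^2)"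
    by simp
  also have "\<dots> = (\<Sum>k\<in>UNIV. \<Sum>j\<in>UNIV. (P $ k $ j)^2) + 2 * (\<Sum>k\<in>UNIV. \<Sum>j\<in>UNIV. P $ k $ j * ?R $ k $ j)
      + (\<Sum>k\<in>UNIV. \<Sum>j\<in>UNIV. (?R $ k $ j)^2)"
  proof -
    have pt: "(P $ k $ j + ?R $ k $ j)^2 = (P $ k $ j)^2 + 2 * (P $ k $ j * ?R $ k $ j) + (?R $ k $ j)^2" for k j
      by (simp add: power2_eq_square algebra_simps)
    show ?thesis unfolding pt by (simp add: sum.distrib sum_distrib_left)
  qed
  finally show ?thesis using cross by (simp add: sum_nonneg)
qed

lemma pinv_optimal_22:
  fixes A :: "real^'n^'m"
  assumes mn: "CARD('m) \<le> CARD('n)" and fr: "full_rank A"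
  shows "pinv A \<in> pginv_row (ereal 2) (ereal 2) A"
proof -
  let ?M = "A ** transpose A"
  let ?G = "matrix_inv ?M"
  have inv: "invertible ?M" using full_rank_invertible[OF mn fr] .
  note MG = matrix_inv_props[OF inv]
  have Msym: "transpose ?M = ?M" by (simp add: matrix_transpose_mul)
  have "transpose ?G ** ?M = mat 1"
    by (metis MG(1) Msym matrix_transpose_mul transpose_mat)
  then have Gsym: "transpose ?G = ?G"
    by (metis MG(1) matrix_mul_assoc matrix_mul_lid matrix_mul_rid)
  let ?P = "pinv A ** A"
  have Pdef: "?P = transpose A ** ?G ** A" by (simp add: pinv_def)
  have Psym: "transpose ?P = ?P"
    unfolding Pdef by (simp add: matrix_transpose_mul Gsym matrix_mul_assoc)
  have key: "?P ** (Y ** A) = ?P" if "A ** Y = mat 1" for Y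
  proof -
    have "?P ** (Y ** A) = transpose A ** ?G ** (A ** Y) ** A" unfolding Pdef by (simp add: matrix_mul_assoc)
    also have "\<dots> = ?P" using that Pdef by simp
    finally show ?thesis .
  qed
  have pg: "pinv A \<in> ginvs A" by (rule pinv_ginvs[OF inv])
  then have PP: "?P ** ?P = ?P" using key unfolding ginvs_def by blast
  show ?thesis
    unfolding pginv_iff[of 2 2, simplified]
  proof (intro conjI ballI)
    show "pinv A \<in> ginvs A" by fact
    fix Y assume "Y \<in> ginvs A"
    then have "?P ** (Y ** A) = ?P" using key unfolding ginvs_def by blast
    then show "Phi 2 2 ?P \<le> Phi 2 2 (Y ** A)"
      unfolding Phi22 using frob_pyth[OF Psym _ PP] by blast
  qed
qed

lemma deriv_lower:
  fixes f :: "real \<Rightarrow> real"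
  assumes "DERIV f 0 :> l" "l \<noteq> 0" "0 < \<delta>"
  shows "\<exists>t. \<bar>t\<bar> < \<delta> \<and> f t < f 0"
proof (cases "l > 0")
  case True
  then obtain d where d: "d > 0" "\<forall>h>0. h < d \<longrightarrow> f (0 - h) < f 0"
    using DERIV_pos_inc_left[OF assms(1)] by blast
  let ?h = "min d \<delta> / 2"
  have "f (0 - ?h) < f 0" using d assms(3) by auto
  moreover have "\<bar>0 - ?h\<bar> < \<delta>" using d assms(3) by auto
  ultimately show ?thesis by blast
next
  case False
  then have "l < 0" using assms(2) by auto
  then obtain d where d: "d > 0" "\<forall>h>0. h < d \<longrightarrow> f 0 > f (0 + h)"
    using DERIV_neg_dec_right[OF assms(1)] by blast
  let ?h = "min d \<delta> / 2"
  have "f (0 + ?h) < f 0" using d assms(3) by auto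
  moreover have "\<bar>0 + ?h\<bar> < \<delta>" using d assms(3) by auto
  ultimately show ?thesis by blast
qed

lemma lemB:
  fixes q :: real
  assumes "0 < q" "q \<noteq> 2"
  shows "\<exists>t. \<bar>1/5 + 2*t\<bar> powr q + \<bar>2/5 - t\<bar> powr q < (1/5) powr q + (2/5) powr q"
proof -
  let ?f = "\<lambda>t::real. (1/5 + 2*t) powr q + (2/5 - t) powr q"
  have d1: "DERIV (\<lambda>t::real. 1/5 + 2*t) 0 :> 2" by (auto intro!: derivative_eq_intros)
  have d2: "DERIV (\<lambda>t::real. 2/5 - t) 0 :> -1" by (auto intro!: derivative_eq_intros)
  have D: "DERIV ?f 0 :> q * (1/5) powr (q - 1) * 2 + q * (2/5) powr (q - 1) * (-1)"
    using DERIV_add[OF DERIV_fun_powr[OF d1, of q] DERIV_fun_powr[OF d2, of q]] by simp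
  have e: "(2/5::real) powr (q - 1) = 2 powr (q - 1) * (1/5) powr (q - 1)"
    by (simp add: powr_mult[symmetric])
  have l: "q * (1/5) powr (q - 1) * 2 + q * (2/5) powr (q - 1) * (-1)
      = q * (1/5) powr (q - 1) * (2 - 2 powr (q - 1))"
    unfolding e by (simp add: algebra_simps)
  have "2 powr (q - 1) \<noteq> (2::real)"
  proof
    assume "2 powr (q - 1) = (2::real)"
    then have "(2::real) powr (q - 1) = 2 powr 1" by simp
    then have "q - 1 = 1" using powr_inj[of 2 "q - 1" 1] by simp
    then show False using assms by simp
  qed
  then have ne: "q * (1/5) powr (q - 1) * 2 + q * (2/5) powr (q - 1) * (-1) \<noteq> 0"
    unfolding l using assms by simp
  obtain t where t: "\<bar>t\<bar> < 1/10" "?f t < ?f 0"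
    using deriv_lower[OF D ne, of "1/10"] by auto
  have "\<bar>1/5 + 2*t\<bar> = 1/5 + 2*t" "\<bar>2/5 - t\<bar> = 2/5 - t" using t(1) by auto
  then show ?thesis using t(2) by (intro exI[of _ t]) simp
qed

lemma jensen3:
  fixes f :: "real \<Rightarrow> real" and a b c :: real
  assumes "convex_on {0<..} f" "0 < a" "0 < b" "0 < c"
  shows "f ((a + b + c) / 3) \<le> (f a + f b + f c) / 3"
proof -
  have "f ((b + c) / 2) = f ((1 - 1/2) *\<^sub>R b + (1/2) *\<^sub>R c)" by (simp add: field_simps)
  also have "\<dots> \<le> (1 - 1/2) * f b + (1/2) * f c"
    using convex_onD[OF assms(1), of "1/2" b c] assms by simp
  finally have h1: "f ((b + c) / 2) \<le> (f b + f c) / 2" by simp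
  have "(a + b + c) / 3 = (1 - 2/3) *\<^sub>R a + (2/3) *\<^sub>R ((b + c) / 2)" by (simp add: field_simps)
  then have "f ((a + b + c) / 3) = f ((1 - 2/3) *\<^sub>R a + (2/3) *\<^sub>R ((b + c) / 2))" by (rule arg_cong)
  also have "\<dots> \<le> (1 - 2/3) * f a + (2/3) * f ((b + c) / 2)"
    using convex_onD[OF assms(1), of "2/3" a "(b+c)/2"] assms by simp
  finally show ?thesis using h1 by simp
qed

lemma pm_ge:
  fixes p :: real
  assumes "2 \<le> p"
  shows "10 \<le> ((5 powr p + 1 + 2 powr p) / 3) powr (2/p)"
proof -
  let ?e = "p/2"
  have cv: "convex_on {0<..} (\<lambda>x::real. x powr ?e)" using assms by (intro powr_convex) simp
  have "(((25::real) + 4 + 1) / 3) powr ?e \<le> (25 powr ?e + 4 powr ?e + 1 powr ?e) / 3"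
    using jensen3[OF cv, of 25 4 1] by simp
  moreover have "(25::real) powr ?e = 5 powr p"
  proof -
    have "(5::real) powr p = (5 powr 2) powr (p/2)" by (simp add: powr_powr)
    then show ?thesis by (simp add: powr_numeral)
  qed
  moreover have "(4::real) powr ?e = 2 powr p"
  proof -
    have "(2::real) powr p = (2 powr 2) powr (p/2)" by (simp add: powr_powr)
    then show ?thesis by (simp add: powr_numeral)
  qed
  ultimately have h: "10 powr ?e \<le> (5 powr p + 1 + 2 powr p) / 3" by simp
  have "(10 powr ?e) powr (2/p) \<le> ((5 powr p + 1 + 2 powr p) / 3) powr (2/p)"
    using powr_mono2[OF _ _ h] assms by simp
  moreover have "(10 powr ?e) powr (2/p) = (10::real)" using assms by (simp add: powr_powr)
  ultimately show ?thesis by simp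
qed

lemma pm_le:
  fixes p :: real
  assumes "1 \<le> p" "p \<le> 2"
  shows "((5 powr p + 1 + 2 powr p) / 3) powr (2/p) \<le> 10"
proof -
  let ?r = "2/p"
  have cv: "convex_on {0<..} (\<lambda>x::real. x powr ?r)" using assms by (intro powr_convex) simp
  have "(((5::real) powr p + 2 powr p + 1) / 3) powr ?r \<le> ((5 powr p) powr ?r + (2 powr p) powr ?r + 1 powr ?r) / 3"
    using jensen3[OF cv, of "5 powr p" "2 powr p" 1] by simp
  moreover have "((5::real) powr p) powr ?r = 25" "((2::real) powr p) powr ?r = 4"
    using assms by (simp_all add: powr_powr powr_numeral)
  ultimately show ?thesis by (simp add: add_ac)
qed

lemma sign_C:
  fixes p :: real
  assumes "1 \<le> p" "p \<noteq> 2"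
  defines "S \<equiv> 5 powr p + 1 + 2 powr p"
  defines "W \<equiv> 5 powr (p - 1) + 2 powr (p - 1) - 1"
  shows "S powr (2/p - 1) * W - 2 * 3 powr (2/p) \<noteq> 0"
proof -
  have Spos: "S > 0" unfolding S_def by (simp add: add_pos_nonneg)
  have "(5::real) powr (p - 1) \<ge> 1" using assms(1) by (intro ge_one_powr_ge_zero) auto
  moreover have "(2::real) powr (p - 1) > 0" by simp
  ultimately have Wpos: "W > 0" unfolding W_def by linarith
  let ?M = "(S/3) powr (2/p)"
  have e1: "S powr (2/p - 1) = S powr (2/p) / S" using Spos by (simp add: powr_diff)
  have e2: "S powr (2/p) = 3 powr (2/p) * ?M"
  proof -
    have "S = 3 * (S/3)" by simp
    then show ?thesis by (metis powr_mult)
  qed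
  have lhs: "S powr (2/p - 1) * W = 3 powr (2/p) * (?M * W / S)" unfolding e1 e2 by simp
  have w10: "10 * W - 2 * S = 3 * 2 powr p - 12"
  proof -
    have "(5::real) powr (p - 1) = 5 powr p / 5" "(2::real) powr (p - 1) = 2 powr p / 2"
      by (simp_all add: powr_diff)
    then show ?thesis unfolding W_def S_def by simp
  qed
  have pos3: "(3::real) powr (2/p) > 0" by simp
  show ?thesis
  proof (cases "p > 2")
    case True
    have "(2::real) powr 2 < 2 powr p" using True by (intro powr_less_mono) auto
    then have "(2::real) powr p > 4" by (simp add: powr_numeral)
    then have "10 * W > 2 * S" using w10 by simp
    moreover have "?M \<ge> 10" unfolding S_def using pm_ge True by simp
    moreover have "10 * W \<le> ?M * W" using calculation(2) Wpos by (intro mult_right_mono) auto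
    ultimately have "?M * W > 2 * S" by linarith
    then have "?M * W / S > 2" using Spos by (simp add: field_simps)
    then have "3 powr (2/p) * 2 < 3 powr (2/p) * (?M * W / S)" by (rule mult_strict_left_mono[OF _ pos3])
    then show ?thesis unfolding lhs by linarith
  next
    case False
    then have p2: "p < 2" using assms by simp
    have "(2::real) powr p < 2 powr 2" using p2 by (intro powr_less_mono) auto
    then have "(2::real) powr p < 4" by (simp add: powr_numeral)
    then have "10 * W < 2 * S" using w10 by simp
    moreover have "?M \<le> 10" unfolding S_def using pm_le assms p2 by simp
    moreover have "?M * W \<le> 10 * W" using calculation(2) Wpos by (intro mult_right_mono) auto
    ultimately have "?M * W < 2 * S" by linarith
    then have "?M * W / S < 2" using Spos by (simp add: field_simps)
    then have "3 powr (2/p) * (?M * W / S) < 3 powr (2/p) * 2" by (rule mult_strict_left_mono[OF _ pos3])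
    then show ?thesis unfolding lhs by linarith
  qed
qed

definition phiC :: "real \<Rightarrow> real \<Rightarrow> real" where
  "phiC p t = 2 * (\<bar>5/6 + t\<bar> powr p + \<bar>t - 1/6\<bar> powr p + \<bar>1/3 + t\<bar> powr p) powr (2/p)
     + (3 * \<bar>2*t - 1/3\<bar> powr p) powr (2/p)"

lemma phiC_scale:
  fixes p s :: real
  assumes "0 < p" "\<bar>s\<bar> < 1"
  shows "phiC p (s/6) = (2 * ((5+s) powr p + (1-s) powr p + (2+s) powr p) powr (2/p)
            + 3 powr (2/p) * (2 - 2* s)^2) / 36"
proof -
  have a1: "\<bar>5/6 + s/6\<bar> = (5+s)/6" "\<bar>s/6 - 1/6\<bar> = (1-s)/6" "\<bar>1/3 + s/6\<bar> = (2+s)/6"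
      "\<bar>2*(s/6) - 1/3\<bar> = (2-2* s)/6" using assms by auto
  have six: "((6::real) powr p) powr (2/p) = 36" using assms by (simp add: powr_powr powr_numeral)
  have sm: "\<bar>5/6 + s/6\<bar> powr p + \<bar>s/6 - 1/6\<bar> powr p + \<bar>1/3 + s/6\<bar> powr p
       = ((5+s) powr p + (1-s) powr p + (2+s) powr p) / 6 powr p"
    unfolding a1 powr_divide by (simp add: add_divide_distrib)
  have "(\<bar>5/6 + s/6\<bar> powr p + \<bar>s/6 - 1/6\<bar> powr p + \<bar>1/3 + s/6\<bar> powr p) powr (2/p)
       = (((5+s) powr p + (1-s) powr p + (2+s) powr p) / 6 powr p) powr (2/p)"
    unfolding sm ..
  also have "\<dots> = ((5+s) powr p + (1-s) powr p + (2+s) powr p) powr (2/p) / 36"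
    unfolding powr_divide six ..
  finally have h1: "(\<bar>5/6 + s/6\<bar> powr p + \<bar>s/6 - 1/6\<bar> powr p + \<bar>1/3 + s/6\<bar> powr p) powr (2/p)
     = ((5+s) powr p + (1-s) powr p + (2+s) powr p) powr (2/p) / 36" .
  have "(3 * \<bar>2*(s/6) - 1/3\<bar> powr p) powr (2/p) = (3 * ((2-2* s) powr p / 6 powr p)) powr (2/p)"
    unfolding a1 powr_divide ..
  also have "\<dots> = 3 powr (2/p) * ((2-2* s) powr p) powr (2/p) / 36"
    by (simp add: powr_mult powr_divide six)
  also have "((2-2* s) powr p) powr (2/p) = (2-2* s)^2"
    using assms by (simp add: powr_powr powr_numeral)
  finally have h2: "(3 * \<bar>2*(s/6) - 1/3\<bar> powr p) powr (2/p) = 3 powr (2/p) * (2-2* s)^2 / 36" .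
  show ?thesis unfolding phiC_def h1 h2 by simp
qed

lemma lemC:
  fixes p :: real
  assumes "1 \<le> p" "p \<noteq> 2"
  shows "\<exists>t. phiC p t < phiC p 0"
proof -
  define S where "S = 5 powr p + 1 + 2 powr p"
  define W where "W = 5 powr (p - 1) + 2 powr (p - 1) - 1"
  let ?U = "\<lambda>s::real. (5+s) powr p + (1-s) powr p + (2+s) powr p"
  let ?Psi = "\<lambda>s::real. 2 * ?U s powr (2/p) + 3 powr (2/p) * (2 - 2* s)^2"
  have p0: "0 < p" using assms by simp
  have dl: "DERIV (\<lambda>s::real. 5 + s) 0 :> 1" "DERIV (\<lambda>s::real. 1 - s) 0 :> -1"
    "DERIV (\<lambda>s::real. 2 + s) 0 :> 1"
    by (auto intro!: derivative_eq_intros)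
  have dU: "DERIV ?U 0 :> p * W"
  proof -
    have "DERIV ?U 0 :> p * (5+0) powr (p - of_nat 1) * 1 + p * (1-0) powr (p - of_nat 1) * (-1)
            + p * (2+0) powr (p - of_nat 1) * 1"
      by (intro DERIV_add DERIV_fun_powr dl) auto
    then show ?thesis unfolding W_def by (simp add: algebra_simps)
  qed
  have U0: "?U 0 = S" unfolding S_def by simp
  have Spos: "S > 0" unfolding S_def by (simp add: add_pos_nonneg)
  have dUp: "DERIV (\<lambda>s. ?U s powr (2/p)) 0 :> (2/p) * S powr (2/p - of_nat 1) * (p * W)"
  proof -
    have "?U 0 > 0" using U0 Spos by simp
    from DERIV_fun_powr[OF dU this, of "2/p"] show ?thesis unfolding U0 .
  qed
  have dq: "DERIV (\<lambda>s::real. (2 - 2* s)^2) 0 :> -8"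
    by (auto intro!: derivative_eq_intros)
  have dPsi: "DERIV ?Psi 0 :> 2 * ((2/p) * S powr (2/p - of_nat 1) * (p * W)) + 3 powr (2/p) * (-8)"
    by (intro DERIV_add DERIV_cmult dUp dq)
  have l: "2 * ((2/p) * S powr (2/p - of_nat 1) * (p * W)) + 3 powr (2/p) * (-8)
        = 4 * (S powr (2/p - 1) * W - 2 * 3 powr (2/p))"
    using p0 by (simp add: field_simps)
  have ne: "2 * ((2/p) * S powr (2/p - of_nat 1) * (p * W)) + 3 powr (2/p) * (-8) \<noteq> 0"
    unfolding l using sign_C[OF assms] unfolding S_def W_def by (simp add: mult.commute)
  obtain s where s: "\<bar>s\<bar> < 1/2" "?Psi s < ?Psi 0"
    using deriv_lower[OF dPsi ne, of "1/2"] by auto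
  have "phiC p (s/6) = ?Psi s / 36" using phiC_scale[OF p0, of s] s(1) by simp
  moreover have "phiC p (0/6) = ?Psi 0 / 36" using phiC_scale[OF p0, of 0] by simp
  ultimately have "phiC p (s/6) < phiC p 0" using s(2) by simp
  then show ?thesis by blast
qed

lemma exists_emb:
  assumes "CARD('m::finite) < CARD('n::finite)"
  shows "\<exists>g::'m \<Rightarrow> 'n. inj g \<and> (\<exists>c. c \<notin> range g)"
proof -
  have "CARD('m) \<le> CARD('n)" using assms by simp
  then have "\<exists>f. f ` (UNIV::'m set) \<subseteq> (UNIV::'n set) \<and> inj_on f UNIV"
    by (intro card_le_inj) auto
  then obtain g :: "'m \<Rightarrow> 'n" where "inj_on g UNIV" by blast
  moreover have "range g \<noteq> UNIV"
  proof
    assume "range g = UNIV"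
    then have "card (range g) = CARD('n)" by simp
    moreover have "card (range g) = CARD('m)" using card_image[OF \<open>inj_on g UNIV\<close>] by simp
    ultimately show False using assms by simp
  qed
  ultimately show ?thesis by blast
qed

lemma sum_emb:
  fixes h :: "'n::finite \<Rightarrow> real" and g :: "'m::finite \<Rightarrow> 'n"
  assumes "inj g" "c \<notin> range g" "\<And>k. k \<notin> range g \<Longrightarrow> k \<noteq> c \<Longrightarrow> h k = 0"
  shows "sum h UNIV = h c + (\<Sum>i\<in>UNIV. h (g i))"
proof -
  have "sum h UNIV = sum h (insert c (range g))"
    by (rule sum.mono_neutral_right) (use assms in auto)
  also have "\<dots> = h c + sum h (range g)" using assms by simp
  also have "sum h (range g) = (\<Sum>i\<in>UNIV. h (g i))"
    using sum.reindex[OF assms(1)] by simp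
  finally show ?thesis .
qed

lemma sum_emb_ge:
  fixes h :: "'n::finite \<Rightarrow> real" and g :: "'m::finite \<Rightarrow> 'n"
  assumes "inj g" "c \<notin> range g" "\<And>k. 0 \<le> h k"
  shows "h c + (\<Sum>i\<in>UNIV. h (g i)) \<le> sum h UNIV"
proof -
  have "h c + (\<Sum>i\<in>UNIV. h (g i)) = sum h (insert c (range g))"
    using assms sum.reindex[OF assms(1), of h] by simp
  also have "\<dots> \<le> sum h UNIV" by (rule sum_mono2) (use assms in auto)
  finally show ?thesis .
qed

definition diagm :: "('m \<Rightarrow> real) \<Rightarrow> real^'m^'m" where
  "diagm d = (\<chi> i j. if i = j then d i else 0)"

lemma diagm_mult: "diagm d ** diagm e = diagm (\<lambda>i. d i * e i)" for d e :: "'m::finite \<Rightarrow> real"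
proof -
  have "(\<Sum>k\<in>UNIV. (if i = k then d i else 0) * (if k = j then e k else 0)) = (if i = j then d i * e i else 0)"
    for i j :: 'm
    by (cases "i = j") (simp_all add: if_distrib if_distribR cong: if_cong)
  then show ?thesis by (simp add: diagm_def matrix_matrix_mult_def vec_eq_iff)
qed

lemma diagm_inv:
  assumes "\<And>i. d i \<noteq> 0"
  shows "matrix_inv (diagm d) = diagm (\<lambda>i. 1 / d i)" "invertible (diagm d)"
proof -
  have "diagm d ** diagm (\<lambda>i. 1 / d i) = mat 1"
    unfolding diagm_mult using assms by (simp add: diagm_def mat_def)
  then show "matrix_inv (diagm d) = diagm (\<lambda>i. 1 / d i)" "invertible (diagm d)"
    using matrix_inv_unique invertible_right_inverse by blast+
qed

lemma pinv_diag:
  fixes A :: "real^'n^'m"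
  assumes "A ** transpose A = diagm d" "\<And>i. d i \<noteq> 0"
  shows "pinv A = (\<chi> k i. A $ i $ k / d i)"
proof -
  have "(\<Sum>l\<in>UNIV. A $ l $ k * (if l = i then 1 / d l else 0)) = A $ i $ k / d i" for k i
    by (simp add: if_distrib cong: if_cong)
  then show ?thesis
    unfolding pinv_def assms(1) diagm_inv[OF assms(2)]
    by (simp add: diagm_def matrix_matrix_mult_def vec_eq_iff transpose_def)
qed

lemma NN_zero_p: "0 < p \<Longrightarrow> \<bar>0::real\<bar> powr p = 0" by simp

lemma sum_dR: "(\<Sum>i\<in>UNIV. f i * (if i = l then a else 0)) = f l * (a::real)" for f :: "'a::finite \<Rightarrow> real"
proof -
  have "(\<lambda>i. f i * (if i = l then a else 0)) = (\<lambda>i. if i = l then f l * a else 0)" by auto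
  then show ?thesis by (simp only:) (simp add: sum.delta)
qed

lemma sum_dL: "(\<Sum>i\<in>UNIV. (if i = l then a else 0) * f i) = (a::real) * f l" for f :: "'a::finite \<Rightarrow> real"
proof -
  have "(\<lambda>i. (if i = l then a else 0) * f i) = (\<lambda>i. if i = l then a * f l else 0)" by auto
  then show ?thesis by (simp only:) (simp add: sum.delta)
qed

definition A4 :: "('m \<Rightarrow> 'n) \<Rightarrow> 'n \<Rightarrow> 'm \<Rightarrow> real^'n^'m" where
  "A4 g c i1 = (\<chi> i j. (if j = g i then 1 else 0) + (if i = i1 \<and> j = c then 2 else 0))"

definition Xb :: "('m \<Rightarrow> 'n) \<Rightarrow> 'n \<Rightarrow> 'm \<Rightarrow> real \<Rightarrow> real \<Rightarrow> real^'m^'n" where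
  "Xb g c i1 a b = (\<chi> k i. if i = i1 then (if k = g i1 then a else if k = c then b else 0)
      else (if k = g i then 1 else 0))"

context
  fixes g :: "'m::finite \<Rightarrow> 'n::finite" and c :: 'n and i1 :: 'm
  assumes ig: "inj g" and cg: "c \<notin> range g"
begin

lemma cne[simp]: "g i \<noteq> c" "c \<noteq> g i" using cg by auto
lemma geq[simp]: "g i = g j \<longleftrightarrow> i = j" using ig by (auto dest: injD)

lemma A4_g: "A4 g c i1 $ i $ (g l) = (if i = l then 1 else 0)"
  by (simp add: A4_def)
lemma A4_c: "A4 g c i1 $ i $ c = (if i = i1 then 2 else 0)"
  by (simp add: A4_def)
lemma A4_0: "j \<notin> range g \<Longrightarrow> j \<noteq> c \<Longrightarrow> A4 g c i1 $ i $ j = 0"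
  by (auto simp add: A4_def)

lemma AX4: "(A4 g c i1 ** X) $ i $ j = X $ (g i) $ j + (if i = i1 then 2 * X $ c $ j else 0)"
proof -
  have "(A4 g c i1 ** X) $ i $ j = (\<Sum>k\<in>UNIV. (if k = g i then 1 else 0) * X $ k $ j
       + (if k = c then (if i = i1 then 2 else 0) else 0) * X $ k $ j)"
    by (simp add: matrix_matrix_mult_def A4_def distrib_right)
  also have "\<dots> = X $ (g i) $ j + (if i = i1 then 2 * X $ c $ j else 0)"
    by (simp only: sum.distrib sum_dL) simp
  finally show ?thesis .
qed

lemma XA4_g: "(X ** A4 g c i1) $ k $ (g l) = X $ k $ l"
  by (simp add: matrix_matrix_mult_def A4_g sum_dR)

lemma XA4_c: "(X ** A4 g c i1) $ k $ c = 2 * X $ k $ i1"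
  by (simp add: matrix_matrix_mult_def A4_c sum_dR)

lemma XA4_0: "j \<notin> range g \<Longrightarrow> j \<noteq> c \<Longrightarrow> (X ** A4 g c i1) $ k $ j = 0"
  by (simp add: matrix_matrix_mult_def A4_0)

lemma NN_XA4:
  assumes "0 < p"
  shows "NN p ((X ** A4 g c i1) $ k) = 2 powr p * \<bar>X $ k $ i1\<bar> powr p + (\<Sum>l\<in>UNIV. \<bar>X $ k $ l\<bar> powr p)"
proof -
  have "NN p ((X ** A4 g c i1) $ k) = \<bar>(X ** A4 g c i1) $ k $ c\<bar> powr p + (\<Sum>l\<in>UNIV. \<bar>(X ** A4 g c i1) $ k $ (g l)\<bar> powr p)"
    unfolding NN_def by (rule sum_emb[OF ig cg]) (simp add: XA4_0)
  also have "\<dots> = 2 powr p * \<bar>X $ k $ i1\<bar> powr p + (\<Sum>l\<in>UNIV. \<bar>X $ k $ l\<bar> powr p)"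
    by (simp add: XA4_g XA4_c abs_mult powr_mult)
  finally show ?thesis .
qed

lemma AAT4: "A4 g c i1 ** transpose (A4 g c i1) = diagm (\<lambda>i. if i = i1 then 5 else 1)"
  by (simp add: vec_eq_iff AX4 transpose_def A4_g A4_c diagm_def)

lemma pinv4: "pinv (A4 g c i1) = Xb g c i1 (1/5) (2/5)"
proof -
  have "pinv (A4 g c i1) = (\<chi> k i. A4 g c i1 $ i $ k / (if i = i1 then 5 else 1))"
    by (rule pinv_diag[OF AAT4]) simp
  then show ?thesis by (simp add: vec_eq_iff A4_def Xb_def)
qed

lemma full4:
  assumes "CARD('m) \<le> CARD('n)"
  shows "full_rank (A4 g c i1)"
  by (rule invertible_full_rank[OF assms]) (simp add: AAT4 diagm_inv)

lemma AXb:
  assumes "a + 2 * b = 1"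
  shows "A4 g c i1 ** Xb g c i1 a b = mat 1"
  using assms by (simp add: vec_eq_iff AX4 Xb_def mat_def)

lemma Xb_g1: "Xb g c i1 a b $ (g i1) $ l = (if l = i1 then a else 0)"
  by (simp add: Xb_def)
lemma Xb_c: "Xb g c i1 a b $ c $ l = (if l = i1 then b else 0)"
  by (simp add: Xb_def)
lemma Xb_gi: "i \<noteq> i1 \<Longrightarrow> Xb g c i1 a b $ (g i) $ l = (if l = i then 1 else 0)"
  by (simp add: Xb_def)
lemma Xb_0: "k \<notin> range g \<Longrightarrow> k \<noteq> c \<Longrightarrow> Xb g c i1 a b $ k $ l = 0"
  by (auto simp add: Xb_def)

lemma sum_abs_delta:
  fixes i :: 'm
  assumes "0 < p"
  shows "(\<Sum>l\<in>UNIV. \<bar>if l = i then a else 0\<bar> powr p) = \<bar>a::real\<bar> powr p"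
proof -
  have "(\<lambda>l. \<bar>if l = i then a else 0\<bar> powr p) = (\<lambda>l. if l = i then \<bar>a\<bar> powr p else 0)" by auto
  then show ?thesis by (simp only:) (simp add: sum.delta)
qed

lemma sum_delta_powr:
  fixes i :: 'm
  assumes "0 < p"
  shows "(\<Sum>l\<in>UNIV. (if l = i then a else 0) powr p) = (a::real) powr p"
proof -
  have "(\<lambda>l. (if l = i then a else 0) powr p) = (\<lambda>l. if l = i then a powr p else 0)" by auto
  then show ?thesis by (simp only:) (simp add: sum.delta)
qed

lemma NN_Xb:
  assumes "0 < p"
  shows "NN p ((Xb g c i1 a b ** A4 g c i1) $ (g i1)) = (1 + 2 powr p) * \<bar>a\<bar> powr p"
    "NN p ((Xb g c i1 a b ** A4 g c i1) $ c) = (1 + 2 powr p) * \<bar>b\<bar> powr p"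
    "i \<noteq> i1 \<Longrightarrow> NN p ((Xb g c i1 a b ** A4 g c i1) $ (g i)) = 1"
    "k \<notin> range g \<Longrightarrow> k \<noteq> c \<Longrightarrow> NN p ((Xb g c i1 a b ** A4 g c i1) $ k) = 0"
  using assms by (simp_all add: NN_XA4 Xb_g1 Xb_c Xb_gi Xb_0 sum_abs_delta sum_delta_powr algebra_simps)

lemma sum_rest:
  fixes f :: "'m \<Rightarrow> real"
  assumes "\<And>i. i \<noteq> i1 \<Longrightarrow> f i = 1"
  shows "(\<Sum>i\<in>UNIV. f i) = f i1 + real (CARD('m) - 1)"
proof -
  have "(\<Sum>i\<in>UNIV. f i) = f i1 + (\<Sum>i\<in>UNIV - {i1}. f i)" by (simp add: sum.remove)
  also have "(\<Sum>i\<in>UNIV - {i1}. f i) = (\<Sum>i\<in>UNIV - {i1}. 1)" using assms by (intro sum.cong) auto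
  also have "\<dots> = real (CARD('m) - 1)" by simp
  finally show ?thesis .
qed

lemma sum_rest_ge:
  fixes f :: "'m \<Rightarrow> real"
  assumes "\<And>i. i \<noteq> i1 \<Longrightarrow> f i \<ge> 1"
  shows "(\<Sum>i\<in>UNIV. f i) \<ge> f i1 + real (CARD('m) - 1)"
proof -
  have "(\<Sum>i\<in>UNIV. f i) = f i1 + (\<Sum>i\<in>UNIV - {i1}. f i)" by (simp add: sum.remove)
  moreover have "(\<Sum>i\<in>UNIV - {i1}. f i) \<ge> (\<Sum>i\<in>UNIV - {i1}. 1)" using assms by (intro sum_mono) auto
  moreover have "(\<Sum>i\<in>UNIV - {i1}. (1::real)) = real (CARD('m) - 1)" by simp
  ultimately show ?thesis by linarith
qed

lemma Phi_Xb:
  assumes "0 < p" "0 < q"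
  shows "Phi p q (Xb g c i1 a b ** A4 g c i1) = (1 + 2 powr p) powr (q/p) * (\<bar>a\<bar> powr q + \<bar>b\<bar> powr q) + real (CARD('m) - 1)"
proof -
  let ?h = "\<lambda>k. NN p ((Xb g c i1 a b ** A4 g c i1) $ k) powr (q/p)"
  have "Phi p q (Xb g c i1 a b ** A4 g c i1) = ?h c + (\<Sum>i\<in>UNIV. ?h (g i))"
    unfolding Phi_def by (rule sum_emb[OF ig cg]) (simp add: NN_Xb[OF assms(1)])
  also have "(\<Sum>i\<in>UNIV. ?h (g i)) = ?h (g i1) + real (CARD('m) - 1)"
    by (rule sum_rest) (simp add: NN_Xb[OF assms(1)])
  also have "?h c = (1 + 2 powr p) powr (q/p) * \<bar>b\<bar> powr q"
    using assms by (simp add: NN_Xb powr_mult powr_powr)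
  also have "?h (g i1) = (1 + 2 powr p) powr (q/p) * \<bar>a\<bar> powr q"
    using assms by (simp add: NN_Xb powr_mult powr_powr)
  finally show ?thesis by (simp add: algebra_simps)
qed

lemma Phi_lower:
  assumes "0 < p" and AX: "A4 g c i1 ** X = mat 1"
  shows "Phi p 2 (X ** A4 g c i1) \<ge> (1 + 2 powr p) powr (2/p) * ((X $ (g i1) $ i1)^2 + (X $ c $ i1)^2) + real (CARD('m) - 1)"
proof -
  let ?h = "\<lambda>k. NN p ((X ** A4 g c i1) $ k) powr (2/p)"
  let ?K = "(1 + 2 powr p) powr (2/p)"
  have NNlow: "NN p ((X ** A4 g c i1) $ k) \<ge> (1 + 2 powr p) * \<bar>X $ k $ i1\<bar> powr p" for k
  proof -
    have "\<bar>X $ k $ i1\<bar> powr p \<le> (\<Sum>l\<in>UNIV. \<bar>X $ k $ l\<bar> powr p)"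
      by (rule member_le_sum) auto
    then show ?thesis using assms(1) by (simp add: NN_XA4 algebra_simps)
  qed
  have hlow: "?h k \<ge> ?K * (X $ k $ i1)^2" for k
  proof -
    have "?h k \<ge> ((1 + 2 powr p) * \<bar>X $ k $ i1\<bar> powr p) powr (2/p)"
      using NNlow[of k] assms(1) by (intro powr_mono2) auto
    moreover have "((1 + 2 powr p) * \<bar>X $ k $ i1\<bar> powr p) powr (2/p) = ?K * (X $ k $ i1)^2"
      using assms(1) by (simp add: powr_mult powr_powr powr_numeral)
    ultimately show ?thesis by simp
  qed
  have hone: "?h (g i) \<ge> 1" if "i \<noteq> i1" for i
  proof -
    have "(A4 g c i1 ** X) $ i $ i = 1" using AX by (simp add: mat_def)
    then have x1: "X $ (g i) $ i = 1" using that by (simp add: AX4)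
    have "1 \<le> NN p ((X ** A4 g c i1) $ (g i))"
    proof -
      have "\<bar>X $ (g i) $ i\<bar> powr p \<le> (\<Sum>l\<in>UNIV. \<bar>X $ (g i) $ l\<bar> powr p)"
        by (rule member_le_sum) auto
      then have "1 \<le> (\<Sum>l\<in>UNIV. \<bar>X $ (g i) $ l\<bar> powr p)" using x1 by simp
      moreover have "0 \<le> 2 powr p * \<bar>X $ g i $ i1\<bar> powr p" by simp
      ultimately show ?thesis unfolding NN_XA4[OF assms(1)] by linarith
    qed
    then have "1 powr (2/p) \<le> ?h (g i)" using assms(1) by (intro powr_mono2) auto
    then show ?thesis by simp
  qed
  have "?h c + (\<Sum>i\<in>UNIV. ?h (g i)) \<le> Phi p 2 (X ** A4 g c i1)"
    unfolding Phi_def by (rule sum_emb_ge[OF ig cg]) simp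
  moreover have "(\<Sum>i\<in>UNIV. ?h (g i)) \<ge> ?h (g i1) + real (CARD('m) - 1)"
    by (rule sum_rest_ge) (rule hone)
  moreover note hlow[of c] hlow[of "g i1"]
  ultimately show ?thesis by (simp add: algebra_simps)
qed

lemma partb_ctx:
  assumes "CARD('m) \<le> CARD('n)" "0 < p" "0 < q"
  shows "pinv (A4 g c i1) \<in> pginv_row (ereal p) (ereal q) (A4 g c i1) \<longleftrightarrow> q = 2"
proof
  assume h: "pinv (A4 g c i1) \<in> pginv_row (ereal p) (ereal q) (A4 g c i1)"
  show "q = 2"
  proof (rule ccontr)
    assume "q \<noteq> 2"
    then obtain t where t: "\<bar>1/5 + 2*t\<bar> powr q + \<bar>2/5 - t\<bar> powr q < (1/5) powr q + (2/5) powr q"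
      using lemB assms by blast
    have "Xb g c i1 (1/5 + 2*t) (2/5 - t) \<in> ginvs (A4 g c i1)"
      using AXb[of "1/5 + 2*t" "2/5 - t"] by (simp add: ginvs_def)
    then have "Phi p q (pinv (A4 g c i1) ** A4 g c i1) \<le> Phi p q (Xb g c i1 (1/5 + 2*t) (2/5 - t) ** A4 g c i1)"
      using h unfolding pginv_iff[OF assms(2,3)] by blast
    moreover have ne: "1 + 2 powr p \<noteq> (0::real)" by (smt (verit) powr_ge_zero)
    moreover have "(1 + 2 powr p) powr (q/p) > 0" using ne by simp
    ultimately show False
      unfolding pinv4 Phi_Xb[OF assms(2,3)] using t by simp
  qed
next
  assume q: "q = 2"
  have two: "0 < (2::real)" by simp
  show "pinv (A4 g c i1) \<in> pginv_row (ereal p) (ereal q) (A4 g c i1)"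
    unfolding q pginv_iff[OF assms(2) two]
  proof (intro conjI ballI)
    show "pinv (A4 g c i1) \<in> ginvs (A4 g c i1)" unfolding pinv4 using AXb[of "1/5" "2/5"] by (simp add: ginvs_def)
    fix Y assume "Y \<in> ginvs (A4 g c i1)"
    then have AY: "A4 g c i1 ** Y = mat 1" by (simp add: ginvs_def)
    have "(A4 g c i1 ** Y) $ i1 $ i1 = 1" using AY by (simp add: mat_def)
    then have sum1: "Y $ (g i1) $ i1 + 2 * Y $ c $ i1 = 1" by (simp add: AX4)
    have "(Y $ (g i1) $ i1)^2 + (Y $ c $ i1)^2 \<ge> 1/5"
    proof -
      have ineq: "(x1 + 2 * x2)^2 \<le> 5 * (x1^2 + x2^2)" for x1 x2 :: real
      proof -
        have "0 \<le> (2 * x1 - x2)^2" by simp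
        then show ?thesis by (simp add: power2_eq_square algebra_simps)
      qed
      from ineq[of "Y $ (g i1) $ i1" "Y $ c $ i1"] sum1 show ?thesis by simp
    qed
    moreover have "(1 + 2 powr p) powr (2/p) > 0" by (smt (verit) powr_ge_zero powr_gt_zero)
    ultimately have "(1 + 2 powr p) powr (2/p) * (1/5) \<le> (1 + 2 powr p) powr (2/p) * ((Y $ (g i1) $ i1)^2 + (Y $ c $ i1)^2)"
      by (intro mult_left_mono) auto
    then show "Phi p 2 (pinv (A4 g c i1) ** A4 g c i1) \<le> Phi p 2 (Y ** A4 g c i1)"
    proof -
      have e: "((1::real)/5)^2 + (2/5)^2 = 1/5" by (simp add: power2_eq_square)
      show ?thesis using Phi_lower[OF assms(2) AY] \<open>(1 + 2 powr p) powr (2/p) * (1/5) \<le> _\<close>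
        unfolding pinv4 Phi_Xb[OF assms(2) two] by (simp add: powr_numeral e)
    qed
  qed
qed

end

declare cne[simp del] geq[simp del]

definition A5 :: "('m \<Rightarrow> 'n) \<Rightarrow> 'n \<Rightarrow> 'm \<Rightarrow> 'm \<Rightarrow> real^'n^'m" where
  "A5 g c i1 i2 = (\<chi> i j. (if j = g i then 1 else 0) + (if i = i1 \<and> j = g i2 then -1 else 0)
      + (if i = i2 \<and> j = g i1 then 1 else 0) + (if i = i2 \<and> j = c then -1 else 0))"

definition Xc :: "('m \<Rightarrow> 'n) \<Rightarrow> 'n \<Rightarrow> 'm \<Rightarrow> 'm \<Rightarrow> real \<Rightarrow> real^'m^'n" where
  "Xc g c i1 i2 t = (\<chi> k i. if i = i1 then (if k = g i1 then 1/2 else if k = g i2 then -1/2 else 0)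
      else if i = i2 then (if k = g i1 then 1/3 + t else if k = g i2 then 1/3 + t else if k = c then -1/3 + 2*t else 0)
      else (if k = g i then 1 else 0))"

context
  fixes g :: "'m::finite \<Rightarrow> 'n::finite" and c :: 'n and i1 i2 :: 'm
  assumes ig: "inj g" and cg: "c \<notin> range g" and i12: "i1 \<noteq> i2"
begin

lemma cne5[simp]: "g i \<noteq> c" "c \<noteq> g i" using cg by auto
lemma geq5[simp]: "g i = g j \<longleftrightarrow> i = j" using ig by (auto dest: injD)
lemma i12s[simp]: "i1 \<noteq> i2" "i2 \<noteq> i1" using i12 by auto

lemma A5_g: "A5 g c i1 i2 $ i $ (g l) = (if i = l then 1 else 0) + (if i = i1 then (if l = i2 then -1 else 0) else 0)
     + (if i = i2 then (if l = i1 then 1 else 0) else 0)"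
  by (simp add: A5_def)
lemma A5_c: "A5 g c i1 i2 $ i $ c = (if i = i2 then -1 else 0)"
  by (simp add: A5_def)
lemma A5_0: "j \<notin> range g \<Longrightarrow> j \<noteq> c \<Longrightarrow> A5 g c i1 i2 $ i $ j = 0"
  by (auto simp add: A5_def)

lemma AX5: "(A5 g c i1 i2 ** X) $ i $ j = X $ (g i) $ j + (if i = i1 then - X $ (g i2) $ j else 0)
    + (if i = i2 then X $ (g i1) $ j - X $ c $ j else 0)"
proof -
  have "(A5 g c i1 i2 ** X) $ i $ j = (\<Sum>k\<in>UNIV. (if k = g i then 1 else 0) * X $ k $ j
       + (if k = g i2 then (if i = i1 then -1 else 0) else 0) * X $ k $ j
       + (if k = g i1 then (if i = i2 then 1 else 0) else 0) * X $ k $ j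
       + (if k = c then (if i = i2 then -1 else 0) else 0) * X $ k $ j)"
    by (simp add: matrix_matrix_mult_def A5_def distrib_right)
  also have "\<dots> = X $ (g i) $ j + (if i = i1 then - X $ (g i2) $ j else 0)
    + (if i = i2 then X $ (g i1) $ j - X $ c $ j else 0)"
    by (simp only: sum.distrib sum_dL) simp
  finally show ?thesis .
qed

lemma XA5_g: "(X ** A5 g c i1 i2) $ k $ (g l) = X $ k $ l + (if l = i2 then - X $ k $ i1 else 0)
     + (if l = i1 then X $ k $ i2 else 0)"
proof -
  have "(X ** A5 g c i1 i2) $ k $ (g l) = (\<Sum>i\<in>UNIV. X $ k $ i * (if i = l then 1 else 0)
      + X $ k $ i * (if i = i1 then (if l = i2 then -1 else 0) else 0)
      + X $ k $ i * (if i = i2 then (if l = i1 then 1 else 0) else 0))"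
    by (simp add: matrix_matrix_mult_def A5_g distrib_left)
  also have "\<dots> = X $ k $ l + (if l = i2 then - X $ k $ i1 else 0)
     + (if l = i1 then X $ k $ i2 else 0)"
    by (simp only: sum.distrib sum_dR) simp
  finally show ?thesis .
qed

lemma XA5_c: "(X ** A5 g c i1 i2) $ k $ c = - X $ k $ i2"
  by (simp add: matrix_matrix_mult_def A5_c sum_dR)

lemma XA5_0: "j \<notin> range g \<Longrightarrow> j \<noteq> c \<Longrightarrow> (X ** A5 g c i1 i2) $ k $ j = 0"
  by (simp add: matrix_matrix_mult_def A5_0)

lemma NN_XA5:
  shows "NN p ((X ** A5 g c i1 i2) $ k) = \<bar>X $ k $ i2\<bar> powr p
     + (\<Sum>l\<in>UNIV. \<bar>(X ** A5 g c i1 i2) $ k $ (g l)\<bar> powr p)"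
proof -
  have "NN p ((X ** A5 g c i1 i2) $ k) = \<bar>(X ** A5 g c i1 i2) $ k $ c\<bar> powr p + (\<Sum>l\<in>UNIV. \<bar>(X ** A5 g c i1 i2) $ k $ (g l)\<bar> powr p)"
    unfolding NN_def by (rule sum_emb[OF ig cg]) (simp add: XA5_0)
  then show ?thesis by (simp add: XA5_c)
qed

lemma AAT5: "A5 g c i1 i2 ** transpose (A5 g c i1 i2) = diagm (\<lambda>i. if i = i1 then 2 else if i = i2 then 3 else 1)"
  by (simp add: vec_eq_iff AX5 transpose_def A5_g A5_c diagm_def)

lemma pinv5: "pinv (A5 g c i1 i2) = Xc g c i1 i2 0"
proof -
  have "pinv (A5 g c i1 i2) = (\<chi> k i. A5 g c i1 i2 $ i $ k / (if i = i1 then 2 else if i = i2 then 3 else 1))"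
    by (rule pinv_diag[OF AAT5]) simp
  then show ?thesis by (simp add: vec_eq_iff A5_def Xc_def)
qed

lemma full5:
  assumes "CARD('m) \<le> CARD('n)"
  shows "full_rank (A5 g c i1 i2)"
  by (rule invertible_full_rank[OF assms]) (simp add: AAT5 diagm_inv)

lemma AXc: "A5 g c i1 i2 ** Xc g c i1 i2 t = mat 1"
  by (simp add: vec_eq_iff AX5 Xc_def mat_def)

lemma rows5:
  "(Xc g c i1 i2 t ** A5 g c i1 i2) $ (g i1) $ (g l) = (if l = i1 then 5/6 + t else if l = i2 then t - 1/6 else 0)"
  "(Xc g c i1 i2 t ** A5 g c i1 i2) $ (g i2) $ (g l) = (if l = i1 then t - 1/6 else if l = i2 then 5/6 + t else 0)"
  "(Xc g c i1 i2 t ** A5 g c i1 i2) $ c $ (g l) = (if l = i1 then 2*t - 1/3 else if l = i2 then 2*t - 1/3 else 0)"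
  "m \<noteq> i1 \<Longrightarrow> m \<noteq> i2 \<Longrightarrow> (Xc g c i1 i2 t ** A5 g c i1 i2) $ (g m) $ (g l) = (if l = m then 1 else 0)"
  "k \<notin> range g \<Longrightarrow> k \<noteq> c \<Longrightarrow> (Xc g c i1 i2 t ** A5 g c i1 i2) $ k $ (g l) = 0"
  by (auto simp add: XA5_g Xc_def)

lemma sum2:
  fixes a b :: 'm
  assumes "a \<noteq> b" "0 < p"
  shows "(\<Sum>l\<in>UNIV. \<bar>if l = a then u else if l = b then v else 0\<bar> powr p) = \<bar>u::real\<bar> powr p + \<bar>v\<bar> powr p"
proof -
  have "(\<lambda>l. \<bar>if l = a then u else if l = b then v else 0\<bar> powr p)
      = (\<lambda>l. (if l = a then \<bar>u\<bar> powr p else 0) + (if l = b then \<bar>v\<bar> powr p else 0))"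
    using assms by auto
  then show ?thesis by (simp only:) (simp add: sum.distrib sum.delta)
qed

lemma sum1:
  fixes a :: 'm
  assumes "0 < p"
  shows "(\<Sum>l\<in>UNIV. (if l = a then (1::real) else 0) powr p) = 1"
proof -
  have "(\<lambda>l. (if l = a then (1::real) else 0) powr p) = (\<lambda>l. if l = a then 1 else 0)"
    using assms by auto
  then show ?thesis by (simp only:) (simp add: sum.delta)
qed

lemma NN5:
  assumes "0 < p"
  shows "NN p ((Xc g c i1 i2 t ** A5 g c i1 i2) $ (g i1)) = \<bar>5/6 + t\<bar> powr p + \<bar>t - 1/6\<bar> powr p + \<bar>1/3 + t\<bar> powr p"
    "NN p ((Xc g c i1 i2 t ** A5 g c i1 i2) $ (g i2)) = \<bar>5/6 + t\<bar> powr p + \<bar>t - 1/6\<bar> powr p + \<bar>1/3 + t\<bar> powr p"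
    "NN p ((Xc g c i1 i2 t ** A5 g c i1 i2) $ c) = 3 * \<bar>2*t - 1/3\<bar> powr p"
    "m \<noteq> i1 \<Longrightarrow> m \<noteq> i2 \<Longrightarrow> NN p ((Xc g c i1 i2 t ** A5 g c i1 i2) $ (g m)) = 1"
    "k \<notin> range g \<Longrightarrow> k \<noteq> c \<Longrightarrow> NN p ((Xc g c i1 i2 t ** A5 g c i1 i2) $ k) = 0"
proof -
  have x1: "Xc g c i1 i2 t $ (g i1) $ i2 = 1/3 + t" "Xc g c i1 i2 t $ (g i2) $ i2 = 1/3 + t"
    "Xc g c i1 i2 t $ c $ i2 = -1/3 + 2*t"
    "m \<noteq> i1 \<Longrightarrow> m \<noteq> i2 \<Longrightarrow> Xc g c i1 i2 t $ (g m) $ i2 = 0"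
    "k \<notin> range g \<Longrightarrow> k \<noteq> c \<Longrightarrow> Xc g c i1 i2 t $ k $ i2 = 0"
    by (auto simp add: Xc_def)
  have ab: "\<bar>-1/3 + 2*t\<bar> = \<bar>2*t - 1/3\<bar>" by simp
  show "NN p ((Xc g c i1 i2 t ** A5 g c i1 i2) $ (g i1)) = \<bar>5/6 + t\<bar> powr p + \<bar>t - 1/6\<bar> powr p + \<bar>1/3 + t\<bar> powr p"
    unfolding NN_XA5 x1 rows5 sum2[OF i12 assms] by simp
  show "NN p ((Xc g c i1 i2 t ** A5 g c i1 i2) $ (g i2)) = \<bar>5/6 + t\<bar> powr p + \<bar>t - 1/6\<bar> powr p + \<bar>1/3 + t\<bar> powr p"
    unfolding NN_XA5 x1 rows5 sum2[OF i12 assms] by simp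
  show "NN p ((Xc g c i1 i2 t ** A5 g c i1 i2) $ c) = 3 * \<bar>2*t - 1/3\<bar> powr p"
    unfolding NN_XA5 x1 rows5 sum2[OF i12 assms] ab by simp
  show "m \<noteq> i1 \<Longrightarrow> m \<noteq> i2 \<Longrightarrow> NN p ((Xc g c i1 i2 t ** A5 g c i1 i2) $ (g m)) = 1"
    using assms by (simp add: NN_XA5 x1 rows5 sum1)
  show "k \<notin> range g \<Longrightarrow> k \<noteq> c \<Longrightarrow> NN p ((Xc g c i1 i2 t ** A5 g c i1 i2) $ k) = 0"
    using assms by (simp add: NN_XA5 x1 rows5)
qed

lemma sum_rest2:
  fixes f :: "'m \<Rightarrow> real"
  assumes "\<And>i. i \<noteq> i1 \<Longrightarrow> i \<noteq> i2 \<Longrightarrow> f i = 1"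
  shows "(\<Sum>i\<in>UNIV. f i) = f i1 + f i2 + real (CARD('m) - 2)"
proof -
  have "(\<Sum>i\<in>UNIV. f i) = f i1 + (\<Sum>i\<in>UNIV - {i1}. f i)" by (simp add: sum.remove)
  also have "(\<Sum>i\<in>UNIV - {i1}. f i) = f i2 + (\<Sum>i\<in>UNIV - {i1} - {i2}. f i)"
    by (subst sum.remove[of _ i2]) (auto simp: Diff_insert2[symmetric] insert_commute)
  also have "(\<Sum>i\<in>UNIV - {i1} - {i2}. f i) = (\<Sum>i\<in>UNIV - {i1} - {i2}. 1)" using assms by (intro sum.cong) auto
  also have "\<dots> = real (card (UNIV - {i1} - {i2}))" by simp
  also have "card (UNIV - {i1} - {i2}) = CARD('m) - 2"
    by (simp add: card_Diff_singleton_if)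
  finally show ?thesis by simp
qed

lemma Phi5:
  assumes "0 < p"
  shows "Phi p 2 (Xc g c i1 i2 t ** A5 g c i1 i2) = phiC p t + real (CARD('m) - 2)"
proof -
  let ?h = "\<lambda>k. NN p ((Xc g c i1 i2 t ** A5 g c i1 i2) $ k) powr (2/p)"
  have "Phi p 2 (Xc g c i1 i2 t ** A5 g c i1 i2) = ?h c + (\<Sum>i\<in>UNIV. ?h (g i))"
    unfolding Phi_def by (rule sum_emb[OF ig cg]) (simp add: NN5[OF assms])
  also have "(\<Sum>i\<in>UNIV. ?h (g i)) = ?h (g i1) + ?h (g i2) + real (CARD('m) - 2)"
    by (rule sum_rest2) (simp add: NN5[OF assms])
  finally show ?thesis unfolding phiC_def using NN5[OF assms] by simp
qed

lemma partc_ctx: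
  assumes "CARD('m) \<le> CARD('n)" "1 \<le> p"
  shows "pinv (A5 g c i1 i2) \<in> pginv_row (ereal p) (ereal 2) (A5 g c i1 i2) \<longleftrightarrow> p = 2"
proof
  have p0: "0 < p" "0 < (2::real)" using assms by auto
  assume h: "pinv (A5 g c i1 i2) \<in> pginv_row (ereal p) (ereal 2) (A5 g c i1 i2)"
  show "p = 2"
  proof (rule ccontr)
    assume "p \<noteq> 2"
    then obtain t where t: "phiC p t < phiC p 0" using lemC assms by blast
    have "Xc g c i1 i2 t \<in> ginvs (A5 g c i1 i2)" using AXc by (simp add: ginvs_def)
    then have "Phi p 2 (pinv (A5 g c i1 i2) ** A5 g c i1 i2) \<le> Phi p 2 (Xc g c i1 i2 t ** A5 g c i1 i2)"
      using h unfolding pginv_iff[OF p0] by blast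
    then show False unfolding pinv5 Phi5[OF p0(1)] using t by simp
  qed
next
  assume "p = 2"
  then show "pinv (A5 g c i1 i2) \<in> pginv_row (ereal p) (ereal 2) (A5 g c i1 i2)"
    using pinv_optimal_22[OF assms(1) full5[OF assms(1)]] by simp
qed

end

declare cne5[simp del] geq5[simp del] i12s[simp del]

lemma lp_norm_nonneg: "0 \<le> lp_norm p v"
proof (cases "p = \<infinity>")
  case True
  have "\<bar>v $ (SOME j. True)\<bar> \<le> Max (range (\<lambda>j. \<bar>v $ j\<bar>))" by (rule Max_ge) auto
  moreover have "0 \<le> \<bar>v $ (SOME j. True)\<bar>" by simp
  ultimately have "0 \<le> Max (range (\<lambda>j. \<bar>v $ j\<bar>))" by linarith
  then show ?thesis using True by (simp add: lp_norm_def)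
next
  case False then show ?thesis by (simp add: lp_norm_def)
qed

lemma lp_norm_abs_cong: "(\<And>j. \<bar>v $ j\<bar> = \<bar>w $ j\<bar>) \<Longrightarrow> lp_norm p v = lp_norm p w"
  by (simp add: lp_norm_def)

lemma lp_norm_scale:
  assumes "0 < p"
  shows "lp_norm p (\<chi> j. c * v $ j) = \<bar>c\<bar> * lp_norm p v"
proof (cases "p = \<infinity>")
  case True
  have m: "mono (\<lambda>x::real. \<bar>c\<bar> * x)" by (rule monoI) (simp add: mult_left_mono)
  have "Max (range (\<lambda>j. \<bar>c * v $ j\<bar>)) = Max ((\<lambda>x. \<bar>c\<bar> * x) ` range (\<lambda>j. \<bar>v $ j\<bar>))"
    by (simp add: image_image abs_mult)
  also have "\<dots> = \<bar>c\<bar> * Max (range (\<lambda>j. \<bar>v $ j\<bar>))"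
    by (rule mono_Max_commute[OF m, symmetric]) auto
  finally show ?thesis using True by (simp add: lp_norm_def)
next
  case False
  then obtain r where r: "p = ereal r" "0 < r" using assms by (cases p) auto
  have "(\<Sum>j\<in>UNIV. \<bar>c * v $ j\<bar> powr r) = \<bar>c\<bar> powr r * (\<Sum>j\<in>UNIV. \<bar>v $ j\<bar> powr r)"
    by (simp add: abs_mult powr_mult sum_distrib_left)
  then have "(\<Sum>j\<in>UNIV. \<bar>c * v $ j\<bar> powr r) powr (1/r) = (\<bar>c\<bar> powr r) powr (1/r) * (\<Sum>j\<in>UNIV. \<bar>v $ j\<bar> powr r) powr (1/r)"
    by (simp add: powr_mult)
  also have "(\<bar>c\<bar> powr r) powr (1/r) = \<bar>c\<bar>" using r by (simp add: powr_powr)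
  finally show ?thesis using r by (simp add: lp_norm_def)
qed

lemma lp_norm_pos:
  assumes "0 < p" "v \<noteq> 0"
  shows "0 < lp_norm p v"
proof -
  obtain j0 where j0: "v $ j0 \<noteq> 0" using assms(2) by (metis vec_eq_iff zero_index)
  show ?thesis
  proof (cases "p = \<infinity>")
    case True
    have "\<bar>v $ j0\<bar> \<le> Max (range (\<lambda>j. \<bar>v $ j\<bar>))" by (rule Max_ge) auto
    moreover have "0 < \<bar>v $ j0\<bar>" using j0 by simp
    ultimately have "0 < Max (range (\<lambda>j. \<bar>v $ j\<bar>))" by linarith
    then show ?thesis using True by (simp add: lp_norm_def)
  next
    case False
    then obtain r where r: "p = ereal r" "0 < r" using assms by (cases p) auto
    have "0 < \<bar>v $ j0\<bar> powr r" using j0 by simp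
    also have "\<dots> \<le> (\<Sum>j\<in>UNIV. \<bar>v $ j\<bar> powr r)" by (rule member_le_sum) auto
    finally show ?thesis using r by (simp add: lp_norm_def)
  qed
qed

context
  fixes i0 :: "'m::finite"
  assumes single: "(UNIV :: 'm set) = {i0}"
begin

lemma all_i0: "(i::'m) = i0" using single by auto

lemma XA_single: "(X ** (A :: real^'n^'m)) $ k = (\<chi> j. X $ k $ i0 * A $ i0 $ j)"
  by (simp add: matrix_matrix_mult_def vec_eq_iff single)

lemma entry_single: "entry_norm q (X :: real^'m^'n) = lp_norm q (\<chi> k. X $ k $ i0)"
proof (cases "q = \<infinity>")
  case True
  have "range (\<lambda>(i, j). \<bar>X $ i $ j\<bar>) = range (\<lambda>k. \<bar>X $ k $ i0\<bar>)"
  proof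
    show "range (\<lambda>(i, j). \<bar>X $ i $ j\<bar>) \<subseteq> range (\<lambda>k. \<bar>X $ k $ i0\<bar>)"
    proof clarify
      fix a b show "\<bar>X $ a $ b\<bar> \<in> range (\<lambda>k. \<bar>X $ k $ i0\<bar>)" using all_i0[of b] by auto
    qed
    show "range (\<lambda>k. \<bar>X $ k $ i0\<bar>) \<subseteq> range (\<lambda>(i, j). \<bar>X $ i $ j\<bar>)"
    proof clarify
      fix k show "\<bar>X $ k $ i0\<bar> \<in> range (\<lambda>(i, j). \<bar>X $ i $ j\<bar>)"
        by (rule image_eqI[of _ _ "(k, i0)"]) auto
    qed
  qed
  then show ?thesis using True by (simp add: entry_norm_def lp_norm_def)
next
  case False
  have "(\<Sum>(i,j)\<in>(UNIV::('n \<times> 'm) set). \<bar>X $ i $ j\<bar> powr real_of_ereal q)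
      = (\<Sum>i\<in>UNIV. \<Sum>j\<in>UNIV. \<bar>X $ i $ j\<bar> powr real_of_ereal q)"
    by (subst UNIV_Times_UNIV[symmetric], subst sum.cartesian_product[symmetric]) (rule refl)
  also have "\<dots> = (\<Sum>i\<in>UNIV. \<bar>X $ i $ i0\<bar> powr real_of_ereal q)" by (simp add: single)
  finally show ?thesis using False by (simp add: entry_norm_def lp_norm_def)
qed

lemma row_single:
  assumes "0 < p" "0 < q"
  shows "row_norm p q (X ** (A :: real^'n^'m)) = lp_norm p (A $ i0) * entry_norm q X"
proof -
  let ?a = "lp_norm p (A $ i0)"
  have "row_norm p q (X ** A) = lp_norm q (\<chi> k. lp_norm p (\<chi> j. X $ k $ i0 * A $ i0 $ j))"
    unfolding row_norm_def XA_single ..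
  also have "\<dots> = lp_norm q (\<chi> k. ?a * X $ k $ i0)"
    by (rule lp_norm_abs_cong) (simp add: lp_norm_scale[OF assms(1), of _ "A $ i0", simplified] abs_mult lp_norm_nonneg)
  also have "\<dots> = ?a * lp_norm q (\<chi> k. X $ k $ i0)"
    using lp_norm_scale[OF assms(2), of ?a "\<chi> k. X $ k $ i0"] by (simp add: abs_of_nonneg lp_norm_nonneg)
  finally show ?thesis by (simp add: entry_single)
qed

lemma parta1:
  assumes "0 < p" "0 < q"
  shows "pginv_row p q (A :: real^'n^'m) = ginv q A"
proof (cases "ginvs A = {}")
  case True then show ?thesis by (simp add: pginv_row_def ginv_def)
next
  case False
  then obtain X where AX: "A ** X = mat 1" by (auto simp: ginvs_def)
  have "A \<noteq> 0"
  proof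
    assume "A = 0"
    then have "(A ** X) $ i0 $ i0 = 0" by (simp add: matrix_matrix_mult_def)
    moreover have "(A ** X) $ i0 $ i0 = 1" using AX by (simp add: mat_def)
    ultimately show False by simp
  qed
  then have "A $ i0 \<noteq> 0" by (metis all_i0 vec_eq_iff zero_index)
  then have apos: "0 < lp_norm p (A $ i0)" using lp_norm_pos assms by blast
  show ?thesis unfolding pginv_row_def ginv_def row_single[OF assms] using apos by simp
qed

end

theorem theorem4:
  assumes mn: "CARD('m) < CARD('n)"
  shows
   "(CARD('m) = 1 \<longrightarrow>
      (\<forall>(A :: real ^ 'n ^ 'm) p q. 0 < p \<longrightarrow> 0 < q \<longrightarrow> pginv_row p q A = ginv q A) \<and>
      (\<exists>A1 :: real ^ 'n ^ 'm. full_rank A1 \<and>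
         (\<forall>p q. 0 < p \<longrightarrow> 0 < q \<longrightarrow> q < \<infinity> \<longrightarrow>
            (pinv A1 \<in> pginv_row p q A1 \<longleftrightarrow> q = 2))))
    \<and> (CARD('m) \<ge> 2 \<longrightarrow>
      (\<exists>A4 :: real ^ 'n ^ 'm. full_rank A4 \<and>
         (\<forall>p q :: real. 1 \<le> p \<longrightarrow> 0 < q \<longrightarrow>
            (pinv A4 \<in> pginv_row (ereal p) (ereal q) A4 \<longleftrightarrow> q = 2))))
    \<and> (CARD('m) \<ge> 3 \<longrightarrow>
      (\<exists>A5 :: real ^ 'n ^ 'm. full_rank A5 \<and>
         (\<forall>p :: real. 1 \<le> p \<longrightarrow>
            (pinv A5 \<in> pginv_row (ereal p) 2 A5 \<longleftrightarrow> p = 2))))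
    \<and> (CARD('m) \<ge> 3 \<longrightarrow>
      (\<forall>p q :: real. 1 \<le> p \<longrightarrow> 0 < q \<longrightarrow>
         ((\<forall>A :: real ^ 'n ^ 'm. full_rank A \<longrightarrow> pinv A \<in> pginv_row (ereal p) (ereal q) A)
          \<longleftrightarrow> p = 2 \<and> q = 2)))"
proof -
  obtain g :: "'m \<Rightarrow> 'n" and c where ig: "inj g" and cg: "c \<notin> range g"
    using exists_emb[OF mn] by blast
  have mle: "CARD('m) \<le> CARD('n)" using mn by simp
  define i1 :: 'm where "i1 = undefined"
  let ?A4 = "A4 g c i1"
  have B4: "\<And>p q. 0 < p \<Longrightarrow> 0 < q \<Longrightarrow> (pinv ?A4 \<in> pginv_row (ereal p) (ereal q) ?A4 \<longleftrightarrow> q = 2)"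
    using partb_ctx[OF ig cg mle] by blast
  have F4: "full_rank ?A4" using full4[OF ig cg mle] .
  have two: "\<exists>i1 i2 :: 'm. i1 \<noteq> i2" if "CARD('m) \<ge> 2"
  proof (rule ccontr)
    assume "\<not> (\<exists>i1 i2 :: 'm. i1 \<noteq> i2)"
    then have "(UNIV :: 'm set) = {undefined}" by auto
    then have "CARD('m) = card {undefined::'m}" by (rule arg_cong)
    then have "CARD('m) = 1" by simp
    then show False using that by simp
  qed
  have C5: "\<exists>A5 :: real ^ 'n ^ 'm. full_rank A5 \<and>
         (\<forall>p :: real. 1 \<le> p \<longrightarrow> (pinv A5 \<in> pginv_row (ereal p) (ereal 2) A5 \<longleftrightarrow> p = 2))"
    if m2: "CARD('m) \<ge> 2"
  proof -
    obtain j1 j2 :: 'm where j12: "j1 \<noteq> j2" using two[OF m2] by blast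
    show ?thesis
      using full5[OF ig cg j12 mle] partc_ctx[OF ig cg j12 mle] by blast
  qed
  have partA: "CARD('m) = 1 \<longrightarrow>
      (\<forall>(A :: real ^ 'n ^ 'm) p q. 0 < p \<longrightarrow> 0 < q \<longrightarrow> pginv_row p q A = ginv q A) \<and>
      (\<exists>A1 :: real ^ 'n ^ 'm. full_rank A1 \<and>
         (\<forall>p q. 0 < p \<longrightarrow> 0 < q \<longrightarrow> q < \<infinity> \<longrightarrow>
            (pinv A1 \<in> pginv_row p q A1 \<longleftrightarrow> q = 2)))"
  proof
    assume c1: "CARD('m) = 1"
    obtain i0 :: 'm where single: "(UNIV :: 'm set) = {i0}" using card_1_singletonE[OF c1] by blast
    have a1: "\<forall>(A :: real ^ 'n ^ 'm) p q. 0 < p \<longrightarrow> 0 < q \<longrightarrow> pginv_row p q A = ginv q A"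
      using parta1[OF single] by blast
    have "\<forall>p q. 0 < p \<longrightarrow> 0 < q \<longrightarrow> q < \<infinity> \<longrightarrow> (pinv ?A4 \<in> pginv_row p q ?A4 \<longleftrightarrow> q = 2)"
    proof (intro allI impI)
      fix p q :: ereal assume p: "0 < p" and q: "0 < q" "q < \<infinity>"
      then obtain r where r: "q = ereal r" "0 < r" by (cases q) auto
      have "pginv_row p q ?A4 = pginv_row (ereal 2) (ereal r) ?A4"
        using a1 p q r by (metis ereal_less(2) zero_less_numeral)
      then show "pinv ?A4 \<in> pginv_row p q ?A4 \<longleftrightarrow> q = 2"
        using B4[of 2 r] r by simp
    qed
    then show "(\<forall>(A :: real ^ 'n ^ 'm) p q. 0 < p \<longrightarrow> 0 < q \<longrightarrow> pginv_row p q A = ginv q A) \<and>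
      (\<exists>A1 :: real ^ 'n ^ 'm. full_rank A1 \<and>
         (\<forall>p q. 0 < p \<longrightarrow> 0 < q \<longrightarrow> q < \<infinity> \<longrightarrow>
            (pinv A1 \<in> pginv_row p q A1 \<longleftrightarrow> q = 2)))"
      using a1 F4 by blast
  qed
  have partB: "CARD('m) \<ge> 2 \<longrightarrow>
      (\<exists>A4 :: real ^ 'n ^ 'm. full_rank A4 \<and>
         (\<forall>p q :: real. 1 \<le> p \<longrightarrow> 0 < q \<longrightarrow>
            (pinv A4 \<in> pginv_row (ereal p) (ereal q) A4 \<longleftrightarrow> q = 2)))"
    using F4 B4 by (metis less_le_trans zero_less_one)
  have partC: "CARD('m) \<ge> 3 \<longrightarrow>
      (\<exists>A5 :: real ^ 'n ^ 'm. full_rank A5 \<and>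
         (\<forall>p :: real. 1 \<le> p \<longrightarrow>
            (pinv A5 \<in> pginv_row (ereal p) 2 A5 \<longleftrightarrow> p = 2)))"
    using C5 by simp
  have partD: "CARD('m) \<ge> 3 \<longrightarrow>
      (\<forall>p q :: real. 1 \<le> p \<longrightarrow> 0 < q \<longrightarrow>
         ((\<forall>A :: real ^ 'n ^ 'm. full_rank A \<longrightarrow> pinv A \<in> pginv_row (ereal p) (ereal q) A)
          \<longleftrightarrow> p = 2 \<and> q = 2))"
  proof (intro impI allI)
    fix p q :: real
    assume m3: "CARD('m) \<ge> 3" and p: "1 \<le> p" and q: "0 < q"
    show "(\<forall>A :: real ^ 'n ^ 'm. full_rank A \<longrightarrow> pinv A \<in> pginv_row (ereal p) (ereal q) A)
          \<longleftrightarrow> p = 2 \<and> q = 2"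
    proof
      assume all: "\<forall>A :: real ^ 'n ^ 'm. full_rank A \<longrightarrow> pinv A \<in> pginv_row (ereal p) (ereal q) A"
      have q2: "q = 2" using all F4 B4[of p q] p q by simp
      obtain A5 :: "real ^ 'n ^ 'm" where A5: "full_rank A5"
        "\<forall>p :: real. 1 \<le> p \<longrightarrow> (pinv A5 \<in> pginv_row (ereal p) (ereal 2) A5 \<longleftrightarrow> p = 2)"
        using C5 m3 by auto
      have "p = 2" using all A5 p q2 by blast
      then show "p = 2 \<and> q = 2" using q2 by simp
    next
      assume "p = 2 \<and> q = 2"
      then show "\<forall>A :: real ^ 'n ^ 'm. full_rank A \<longrightarrow> pinv A \<in> pginv_row (ereal p) (ereal q) A"
        using pinv_optimal_22[OF mle] by simp
    qed
  qed
  show ?thesis using partA partB partC partD by blast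
qed

end
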